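(* Let $h$ be a Hessenberg function on $\{1,\dots,n\}$ with degree tuple $(\beta_n,\dots,\beta_1)$, and let $R=\mathbb{Z}[x_1,\dots,x_n]$. Then $R/J_h$ is a free $\mathbb{Z}$-module with basis (the images of) the monomials $$\mathcal{B}_h=\{x_1^{\alpha_1}x_2^{\alpha_2}\cdots x_n^{\alpha_n} : 0\le\alpha_i\le\beta_i-1,\ i=1,\dots,n\}.$$
   Context: A Hessenberg function is a map $h:\{1,\dots,n\}\to\{1,\dots,n\}$, $h_i:=h(i)$, with $i\le h_i\le n$ for all $i$ and $h_i\le h_{i+1}$ for $1\le i\le n-1$. Its degree tuple is $(\beta_n,\beta_{n-1},\dots,\beta_1)$ with $\beta_i=i-\#\{k: h_k<i\}$. For a set $S$ of variables, $\tilde e_r(S)$ denotes the complete homogeneous symmetric polynomial of degree $r$ in $S$ (sum of all degree-$r$ monomials in $S$, e.g. $\tilde e_2(x_3,x_4)=x_3^2+x_3x_4+x_4^2$). The ideal is $J_h=\langle \tilde e_{\beta_n}(x_n),\tilde e_{\beta_{n-1}}(x_{n-1},x_n),\dots,\tilde e_{\beta_1}(x_1,\dots,x_n)\rangle\subseteq R$, i.e. the $i$-th generator is $\tilde e_{\beta_i}(x_i,x_{i+1},\dots,x_n)$. *)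

theory Defs
  imports Main "HOL-Library.Poly_Mapping"
begin

text \<open>Multivariate polynomials over the integers in variables x_1, x_2, ...:
  a polynomial is a finitely supported map from exponent vectors
  (finitely supported maps nat to nat) to integer coefficients.\<close>
type_synonym mpoly_int = "(nat \<Rightarrow>\<^sub>0 nat) \<Rightarrow>\<^sub>0 int"

definition monomial :: "(nat \<Rightarrow>\<^sub>0 nat) \<Rightarrow> mpoly_int" where
  "monomial \<alpha> = Poly_Mapping.single \<alpha> 1"

definition in_R :: "nat \<Rightarrow> mpoly_int \<Rightarrow> bool" where
  "in_R n p \<longleftrightarrow> (\<forall>\<alpha>\<in>Poly_Mapping.keys p. Poly_Mapping.keys \<alpha> \<subseteq> {1..n})"

definition is_hessenberg :: "nat \<Rightarrow> (nat \<Rightarrow> nat) \<Rightarrow> bool" where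
  "is_hessenberg n h \<longleftrightarrow>
     (\<forall>i\<in>{1..n}. i \<le> h i \<and> h i \<le> n) \<and>
     (\<forall>i. 1 \<le> i \<and> i < n \<longrightarrow> h i \<le> h (Suc i))"

definition hess_beta :: "nat \<Rightarrow> (nat \<Rightarrow> nat) \<Rightarrow> nat \<Rightarrow> nat" where
  "hess_beta n h i = i - card {k \<in> {1..n}. h k < i}"

definition complete_hom :: "nat \<Rightarrow> nat set \<Rightarrow> mpoly_int" where
  "complete_hom r S =
     (\<Sum>\<alpha> \<in> {\<alpha>. Poly_Mapping.keys \<alpha> \<subseteq> S \<and> (\<Sum>j\<in>S. Poly_Mapping.lookup \<alpha> j) = r}. monomial \<alpha>)"

definition hess_ideal :: "nat \<Rightarrow> (nat \<Rightarrow> nat) \<Rightarrow> mpoly_int set" where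
  "hess_ideal n h =
     {(\<Sum>i=1..n. c i * complete_hom (hess_beta n h i) {i..n}) | c. \<forall>i\<in>{1..n}. in_R n (c i)}"

definition hess_basis_exps :: "nat \<Rightarrow> (nat \<Rightarrow> nat) \<Rightarrow> (nat \<Rightarrow>\<^sub>0 nat) set" where
  "hess_basis_exps n h =
     {\<alpha>. Poly_Mapping.keys \<alpha> \<subseteq> {1..n} \<and> (\<forall>i\<in>{1..n}. Poly_Mapping.lookup \<alpha> i \<le> hess_beta n h i - 1)}"

end

theory Submission imports Defs "HOL-Computational_Algebra.Polynomial" begin

abbreviation lk where "lk \<equiv> Poly_Mapping.lookup"
abbreviation ks where "ks \<equiv> Poly_Mapping.keys"
abbreviation single where "single \<equiv> Poly_Mapping.single"

definition supp :: "nat set \<Rightarrow> mpoly_int \<Rightarrow> bool" where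
  "supp S p \<longleftrightarrow> (\<forall>\<gamma>\<in>ks p. ks \<gamma> \<subseteq> S)"

definition red :: "nat \<Rightarrow> nat \<Rightarrow> mpoly_int \<Rightarrow> bool" where
  "red k b p \<longleftrightarrow> (\<forall>\<gamma>\<in>ks p. lk \<gamma> k < b)"

definition X :: "nat \<Rightarrow> mpoly_int" where
  "X k = single (single k 1) 1"

definition E :: "nat \<Rightarrow> mpoly_int poly \<Rightarrow> mpoly_int" where
  "E k P = poly P (X k)"

lemma keys_nat_add: "ks ((a::nat \<Rightarrow>\<^sub>0 nat) + b) = ks a \<union> ks b"
  by (simp add: set_eq_iff in_keys_iff lookup_add)

lemma supp_0 [simp]: "supp S 0" by (simp add: supp_def)
lemma supp_1 [simp]: "supp S 1" by (simp add: supp_def)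
lemma supp_add: "supp S p \<Longrightarrow> supp S q \<Longrightarrow> supp S (p + q)"
  unfolding supp_def using keys_add[of p q] by (meson Un_iff subsetD)
lemma supp_uminus: "supp S p \<Longrightarrow> supp S (- p)"
  unfolding supp_def by simp
lemma supp_diff: "supp S p \<Longrightarrow> supp S q \<Longrightarrow> supp S (p - q)"
  unfolding supp_def using keys_diff[of p q] by (meson Un_iff subsetD)
lemma supp_mult: "supp S p \<Longrightarrow> supp S q \<Longrightarrow> supp S (p * q)"
proof -
  assume a: "supp S p" "supp S q"
  show ?thesis unfolding supp_def
  proof
    fix \<gamma> assume "\<gamma> \<in> ks (p * q)"
    then obtain x y where "x \<in> ks p" "y \<in> ks q" "\<gamma> = x + y"
      using keys_mult[of p q] by blast
    then show "ks \<gamma> \<subseteq> S" using a unfolding supp_def by (auto simp: keys_nat_add)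
  qed
qed
lemma supp_sum: "(\<And>i. i \<in> A \<Longrightarrow> supp S (f i)) \<Longrightarrow> supp S (sum f A)"
  by (induction A rule: infinite_finite_induct) (auto intro: supp_add)
lemma supp_mono: "supp S p \<Longrightarrow> S \<subseteq> T \<Longrightarrow> supp T p"
  unfolding supp_def by blast
lemma supp_single: "ks \<gamma> \<subseteq> S \<Longrightarrow> supp S (single \<gamma> c)"
  unfolding supp_def by simp
lemma supp_pow: "supp S p \<Longrightarrow> supp S (p ^ m)"
  by (induction m) (auto intro: supp_mult)
lemma supp_X: "k \<in> S \<Longrightarrow> supp S (X k)"
  unfolding X_def by (rule supp_single) simp

lemma X_pow: "X k ^ m = single (single k m) 1"
  by (induction m) (simp_all add: X_def mult_single flip: single_add)

lemma expansion: "f = (\<Sum>\<gamma>\<in>ks f. single \<gamma> (lk f \<gamma>))"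
proof (rule poly_mapping_eqI)
  fix \<delta>
  show "lk f \<delta> = lk (\<Sum>\<gamma>\<in>ks f. single \<gamma> (lk f \<gamma>)) \<delta>"
    by (simp add: lookup_sum lookup_single when_def in_keys_iff)
qed

lemma red_add: "red k b p \<Longrightarrow> red k b q \<Longrightarrow> red k b (p + q)"
  unfolding red_def using keys_add[of p q] by (meson Un_iff subsetD)
lemma red_diff: "red k b p \<Longrightarrow> red k b q \<Longrightarrow> red k b (p - q)"
  unfolding red_def using keys_diff[of p q] by (meson Un_iff subsetD)
lemma red_0 [simp]: "red k b 0" by (simp add: red_def)
lemma red_sum: "(\<And>i. i \<in> A \<Longrightarrow> red k b (f i)) \<Longrightarrow> red k b (sum f A)"
  by (induction A rule: infinite_finite_induct) (auto intro: red_add)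
lemma red_free_mult: "supp (- {k}) p \<Longrightarrow> red k b q \<Longrightarrow> red k b (p * q)"
proof -
  assume a: "supp (- {k}) p" "red k b q"
  show ?thesis unfolding red_def
  proof
    fix \<gamma> assume "\<gamma> \<in> ks (p * q)"
    then obtain x y where "x \<in> ks p" "y \<in> ks q" "\<gamma> = x + y"
      using keys_mult[of p q] by blast
    moreover have "lk x k = 0" using a(1) \<open>x \<in> _\<close> unfolding supp_def by (auto simp: in_keys_iff)
    ultimately show "lk \<gamma> k < b" using a(2) unfolding red_def by (simp add: lookup_add)
  qed
qed


lemma lookup_mult_single_shift: "lk ((c::mpoly_int) * single (\<beta>::nat \<Rightarrow>\<^sub>0 nat) (1::int)) (\<delta> + \<beta>) = lk c \<delta>"
proof -
  have "c * single \<beta> 1 = (\<Sum>\<gamma>\<in>ks c. single \<gamma> (lk c \<gamma>)) * single \<beta> 1"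
    by (metis expansion)
  also have "\<dots> = (\<Sum>\<gamma>\<in>ks c. single (\<gamma> + \<beta>) (lk c \<gamma>))"
    by (simp add: sum_distrib_right mult_single)
  moreover have eq: "x + \<beta> = \<delta> + \<beta> \<longleftrightarrow> x = \<delta>" for x :: "nat \<Rightarrow>\<^sub>0 nat"
    by (simp add: poly_mapping_eq_iff lookup_add fun_eq_iff)
  ultimately show ?thesis
    by (simp add: lookup_sum lookup_single when_def in_keys_iff eq)
qed

lemma lookup_free_mult_Xpow:
  assumes "supp (- {k}) c" "lk \<gamma> k \<noteq> i"
  shows "lk (c * X k ^ i) \<gamma> = 0"
proof -
  have "\<gamma> \<notin> ks (c * X k ^ i)"
  proof
    assume "\<gamma> \<in> ks (c * X k ^ i)"
    then obtain a b where "a \<in> ks c" "b \<in> ks (X k ^ i)" "\<gamma> = a + b"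
      using keys_mult[of c "X k ^ i"] by blast
    moreover have "lk a k = 0" using assms(1) \<open>a \<in> ks c\<close> unfolding supp_def by (auto simp: in_keys_iff)
    moreover have "b = single k i" using \<open>b \<in> ks (X k ^ i)\<close> by (simp add: X_pow split: if_splits)
    ultimately show False using assms(2) by (simp add: lookup_add)
  qed
  then show ?thesis by (simp add: in_keys_iff)
qed
lemma lookup_E:
  assumes "\<forall>j. supp (- {k}) (coeff P j)" "lk \<delta> k = 0"
  shows "lk (E k P) (\<delta> + single k j) = lk (coeff P j) \<delta>"
proof -
  have "lk (E k P) (\<delta> + single k j) = (\<Sum>i\<le>degree P. lk (coeff P i * X k ^ i) (\<delta> + single k j))"
    by (simp add: E_def poly_altdef lookup_sum)
  also have "\<dots> = (\<Sum>i\<le>degree P. if i = j then lk (coeff P j) \<delta> else 0)"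
  proof (rule sum.cong)
    fix i assume "i \<in> {..degree P}"
    show "lk (coeff P i * X k ^ i) (\<delta> + single k j) = (if i = j then lk (coeff P j) \<delta> else 0)"
    proof (cases "i = j")
      case True
      then show ?thesis by (simp add: X_pow lookup_mult_single_shift)
    next
      case False
      have "lk (\<delta> + single k j) k \<noteq> i" using False assms(2) by (simp add: lookup_add)
      then show ?thesis using False assms(1) lookup_free_mult_Xpow by simp
    qed
  qed simp
  also have "\<dots> = lk (coeff P j) \<delta>"
    by (simp add: coeff_eq_0)
  finally show ?thesis .
qed
lemma E_zero:
  assumes "\<forall>j. supp (- {k}) (coeff P j)" "E k P = 0"
  shows "P = 0"
proof (rule poly_eqI)
  fix j
  show "coeff P j = coeff 0 j"
  proof (simp, rule poly_mapping_eqI)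
    fix \<delta>
    show "lk (coeff P j) \<delta> = lk 0 \<delta>"
    proof (cases "lk \<delta> k = 0")
      case True
      then show ?thesis using lookup_E[OF assms(1) True, of j] assms(2) by simp
    next
      case False
      have "\<delta> \<notin> ks (coeff P j)"
      proof
        assume "\<delta> \<in> ks (coeff P j)"
        then have "ks \<delta> \<subseteq> - {k}" using assms(1) unfolding supp_def by blast
        moreover have "k \<in> ks \<delta>" using False by (simp add: in_keys_iff)
        ultimately show False by blast
      qed
      then show ?thesis by (simp add: in_keys_iff)
    qed
  qed
qed

lemma decomp:
  assumes "supp S f"
  shows "\<exists>P. (\<forall>j. supp (S - {k}) (coeff P j)) \<and> E k P = f \<and> (\<forall>b. 1 \<le> b \<longrightarrow> red k b f \<longrightarrow> degree P < b)"
proof -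
  define sh where "sh \<gamma> = \<gamma> - single k (lk \<gamma> k)" for \<gamma> :: "nat \<Rightarrow>\<^sub>0 nat"
  have sh_lk: "lk (sh \<gamma>) i = (if i = k then 0 else lk \<gamma> i)" for \<gamma> i
    by (simp add: sh_def lookup_minus lookup_single when_def)
  have sh_add: "sh \<gamma> + single k (lk \<gamma> k) = \<gamma>" for \<gamma>
    by (rule poly_mapping_eqI) (simp add: lookup_add sh_lk lookup_single when_def)
  define P where "P = (\<Sum>\<gamma>\<in>ks f. monom (single (sh \<gamma>) (lk f \<gamma>)) (lk \<gamma> k))"
  have c: "supp (S - {k}) (coeff P j)" for j
    unfolding P_def coeff_sum
  proof (rule supp_sum)
    fix \<gamma> assume g: "\<gamma> \<in> ks f"
    have "ks (sh \<gamma>) \<subseteq> S - {k}"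
    proof
      fix i assume "i \<in> ks (sh \<gamma>)"
      then have "i \<noteq> k" "i \<in> ks \<gamma>" by (auto simp: in_keys_iff sh_lk split: if_splits)
      then show "i \<in> S - {k}" using assms g unfolding supp_def by auto
    qed
    then show "supp (S - {k}) (coeff (monom (single (sh \<gamma>) (lk f \<gamma>)) (lk \<gamma> k)) j)"
      by (simp add: supp_single)
  qed
  have "E k P = (\<Sum>\<gamma>\<in>ks f. single (sh \<gamma>) (lk f \<gamma>) * X k ^ (lk \<gamma> k))"
    unfolding P_def E_def by (simp add: poly_sum poly_monom)
  also have "\<dots> = (\<Sum>\<gamma>\<in>ks f. single \<gamma> (lk f \<gamma>))"
    by (rule sum.cong) (simp_all add: X_pow mult_single sh_add)
  also have "\<dots> = f" by (metis expansion)
  finally have e: "E k P = f" .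
  have d: "degree P < b" if "1 \<le> b" "red k b f" for b
  proof -
    have "degree P \<le> b - 1" unfolding P_def
    proof (rule degree_sum_le)
      fix \<gamma> assume "\<gamma> \<in> ks f"
      then have "lk \<gamma> k < b" using that unfolding red_def by auto
      then show "degree (monom (single (sh \<gamma>) (lk f \<gamma>)) (lk \<gamma> k)) \<le> b - 1"
        using degree_monom_le[of "single (sh \<gamma>) (lk f \<gamma>)" "lk \<gamma> k"] by linarith
    qed simp
    then show ?thesis using that by linarith
  qed
  show ?thesis using c e d by blast
qed

lemma monic_div:
  fixes G :: "'a::comm_ring_1 poly"
  assumes A0: "A 0" and Aadd: "\<And>x y. A x \<Longrightarrow> A y \<Longrightarrow> A (x + y)"
    and Adiff: "\<And>x y. A x \<Longrightarrow> A y \<Longrightarrow> A (x - y)"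
    and Amult: "\<And>x y. A x \<Longrightarrow> A y \<Longrightarrow> A (x * y)"
    and AG: "\<And>j. A (coeff G j)" and lc: "lead_coeff G = 1" and dG: "1 \<le> degree G"
  shows "(\<And>j. A (coeff P j)) \<Longrightarrow> \<exists>Q R. (\<forall>j. A (coeff Q j)) \<and> (\<forall>j. A (coeff R j)) \<and> P = G * Q + R \<and> degree R < degree G"
proof (induction "degree P" arbitrary: P rule: less_induct)
  case less
  have Asum: "A (sum f S)" if "\<And>i. i \<in> S \<Longrightarrow> A (f i)" for f and S :: "nat set"
    using that by (induction S rule: infinite_finite_induct) (auto simp: A0 Aadd)
  have Amul: "A (coeff (p * q) j)" if "\<And>j. A (coeff p j)" "\<And>j. A (coeff q j)" for p q j
    unfolding coeff_mult by (rule Asum) (simp add: Amult that)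
  have Amon: "A (coeff (monom c m) j)" if "A c" for c m j
    using that A0 by simp
  show ?case
  proof (cases "degree P < degree G")
    case True
    then show ?thesis using less.prems A0 by (intro exI[of _ 0] exI[of _ P]) simp
  next
    case False
    define m where "m = degree P - degree G"
    define c where "c = lead_coeff P"
    define P' where "P' = P - monom c m * G"
    have cP: "coeff (monom c m * G) (degree P) = c"
      using False lc by (simp add: coeff_monom_mult m_def)
    have dle: "degree (monom c m * G) \<le> degree P"
      using degree_mult_le[of "monom c m" G] degree_monom_le[of c m] False m_def by linarith
    have "degree P' \<le> degree P" unfolding P'_def using dle by (simp add: degree_diff_le)
    moreover have "coeff P' (degree P) = 0" unfolding P'_def using cP c_def by simp
    moreover have "0 < degree P" using False dG by linarith
    ultimately have lt: "degree P' < degree P"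
      by (metis leading_coeff_0_iff le_neq_implies_less degree_0)
    have AP': "A (coeff P' j)" for j
      unfolding P'_def coeff_diff using less.prems AG Amul Amon c_def Adiff by simp
    obtain Q R where QR: "\<forall>j. A (coeff Q j)" "\<forall>j. A (coeff R j)" "P' = G * Q + R" "degree R < degree G"
      using less.hyps[OF lt AP'] by blast
    have "P = G * (Q + monom c m) + R" using QR(3) unfolding P'_def by (simp add: algebra_simps)
    moreover have "A (coeff (Q + monom c m) j)" for j
      using QR(1) Amon less.prems c_def Aadd by simp
    ultimately show ?thesis using QR by blast
  qed
qed


lemma supp_E: "(\<And>j. supp T (coeff P j)) \<Longrightarrow> k \<in> T' \<Longrightarrow> T \<subseteq> T' \<Longrightarrow> supp T' (E k P)"
  unfolding E_def poly_altdef
  by (intro supp_sum supp_mult supp_pow supp_X) (auto intro: supp_mono)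

lemma red_E: "(\<And>j. supp (- {k}) (coeff R j)) \<Longrightarrow> degree R < b \<Longrightarrow> red k b (E k R)"
  unfolding E_def poly_altdef
proof (intro red_sum red_free_mult)
  fix i assume "degree R < b" "i \<in> {..degree R}"
  then show "red k b (X k ^ i)" by (simp add: X_pow red_def)
qed

lemma sh_lk: "lk (\<gamma> - single k (lk \<gamma> k)) i = (if i = k then 0 else lk \<gamma> i)"
  by (simp add: lookup_minus lookup_single when_def)
lemma sh_add: "(\<gamma> - single k (lk \<gamma> k)) + single k (lk \<gamma> k) = \<gamma>"
  by (rule poly_mapping_eqI) (simp add: lookup_add sh_lk lookup_single when_def)

lemma coeff_mult_supp: "(\<And>j. supp S (coeff p j)) \<Longrightarrow> (\<And>j. supp S (coeff q j)) \<Longrightarrow> supp S (coeff (p * q) j)"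
  unfolding coeff_mult by (intro supp_sum supp_mult) auto

locale tri =
  fixes n :: nat and \<beta> :: "nat \<Rightarrow> nat" and g :: "nat \<Rightarrow> mpoly_int" and G :: "nat \<Rightarrow> mpoly_int poly"
  assumes G_lc: "k \<in> {1..n} \<Longrightarrow> lead_coeff (G k) = 1"
  and G_deg: "k \<in> {1..n} \<Longrightarrow> degree (G k) = \<beta> k"
  and \<beta>_pos: "k \<in> {1..n} \<Longrightarrow> 1 \<le> \<beta> k"
  and G_coeff: "k \<in> {1..n} \<Longrightarrow> supp {Suc k..n} (coeff (G k) j)"
  and g_E: "k \<in> {1..n} \<Longrightarrow> g k = E k (G k)"
begin
definition md where "md k f = (THE r. red k (\<beta> k) r \<and> (\<exists>q. f - r = q * g k))"
end

context tri begin
lemma g_supp: "k \<in> {1..n} \<Longrightarrow> supp {k..n} (g k)"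
  using g_E G_coeff by (auto intro!: supp_E)

lemma uniq:
  assumes k: "k \<in> {1..n}" and r: "red k (\<beta> k) r" and rq: "r = q * g k"
  shows "r = 0"
proof -
  have U: "UNIV - {k} = - {k}" by auto
  obtain Q where Q: "\<And>j. supp (- {k}) (coeff Q j)" "E k Q = q"
    using decomp[of UNIV q k] U by (auto simp: supp_def)
  obtain R where R0: "\<forall>j. supp (UNIV - {k}) (coeff R j)" "E k R = r"
      "\<forall>b. 1 \<le> b \<longrightarrow> red k b r \<longrightarrow> degree R < b"
    using decomp[of UNIV r k] by (auto simp: supp_def)
  have R: "\<And>j. supp (- {k}) (coeff R j)" "E k R = r" "degree R < \<beta> k"
    using R0 U r \<beta>_pos[OF k] by auto
  have Gc: "supp (- {k}) (coeff (G k) j)" for j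
    using G_coeff[OF k] by (rule supp_mono) auto
  have QG: "supp (- {k}) (coeff (Q * G k) j)" for j
    by (rule coeff_mult_supp) (use Q Gc in auto)
  have "E k (R - Q * G k) = 0"
    using R(2) Q(2) rq g_E[OF k] by (simp add: E_def)
  then have "R - Q * G k = 0"
    by (rule E_zero[rotated]) (use R(1) QG in \<open>auto intro: supp_diff\<close>)
  then have RQ: "R = Q * G k" by simp
  have "Q = 0"
  proof (rule ccontr)
    assume "Q \<noteq> 0"
    have "coeff (Q * G k) (degree Q + degree (G k)) = lead_coeff Q"
      using coeff_mult_degree_sum[of Q "G k"] G_lc[OF k] by simp
    also have "\<dots> \<noteq> 0" using \<open>Q \<noteq> 0\<close> by simp
    finally have "degree Q + degree (G k) \<le> degree R" unfolding RQ by (rule le_degree)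
    then show False using R(3) G_deg[OF k] by simp
  qed
  then show "r = 0" using RQ R(2) by (simp add: E_def)
qed
end

context tri begin
lemma md_exists:
  assumes k: "k \<in> {1..n}" and f: "supp S f" and S: "{k..n} \<subseteq> S"
  shows "\<exists>q r. supp S q \<and> supp S r \<and> red k (\<beta> k) r \<and> f - r = q * g k"
proof -
  have kS: "k \<in> S" using S k by auto
  obtain P where P: "\<And>j. supp (S - {k}) (coeff P j)" "E k P = f"
    using decomp[OF f, of k] by blast
  have AG: "supp (S - {k}) (coeff (G k) j)" for j
    using G_coeff[OF k] by (rule supp_mono) (use S in auto)
  obtain Q R where QR: "\<forall>j. supp (S - {k}) (coeff Q j)" "\<forall>j. supp (S - {k}) (coeff R j)"
      "P = G k * Q + R" "degree R < degree (G k)"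
    using monic_div[where A = "supp (S - {k})" and G = "G k" and P = P]
      supp_add supp_diff supp_mult AG G_lc[OF k] G_deg[OF k] \<beta>_pos[OF k] P(1) by auto
  have "supp S (E k Q)" using QR(1) kS by (intro supp_E[of "S - {k}"]) auto
  moreover have "supp S (E k R)" using QR(2) kS by (intro supp_E[of "S - {k}"]) auto
  moreover have "red k (\<beta> k) (E k R)"
    using QR(2,4) G_deg[OF k] by (intro red_E) (auto intro: supp_mono)
  moreover have "f - E k R = E k Q * g k"
  proof -
    have "f = E k (G k * Q + R)" using P(2) QR(3) by simp
    also have "\<dots> = g k * E k Q + E k R" using g_E[OF k] by (simp add: E_def)
    finally show ?thesis by (simp add: algebra_simps)
  qed
  ultimately show ?thesis by blast
qed

lemma md_char:
  assumes k: "k \<in> {1..n}" and r: "red k (\<beta> k) r" and rq: "f - r = q * g k"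
  shows "md k f = r"
  unfolding md_def
proof (rule the_equality)
  show "red k (\<beta> k) r \<and> (\<exists>q. f - r = q * g k)" using r rq by blast
next
  fix r' assume "red k (\<beta> k) r' \<and> (\<exists>q. f - r' = q * g k)"
  then obtain q' where r': "red k (\<beta> k) r'" "f - r' = q' * g k" by blast
  have "r' - r = (q - q') * g k" using rq r'(2) by (simp add: algebra_simps)
  moreover have "red k (\<beta> k) (r' - r)" using r r'(1) by (rule red_diff[rotated])
  ultimately have "r' - r = 0" using uniq[OF k] by blast
  then show "r' = r" by simp
qed
end


context tri begin
lemma md_props:
  assumes k: "k \<in> {1..n}" and f: "supp S f" and S: "{k..n} \<subseteq> S"
  shows "supp S (md k f) \<and> red k (\<beta> k) (md k f) \<and> (\<exists>q. supp S q \<and> f - md k f = q * g k)"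
proof -
  obtain q r where qr: "supp S q" "supp S r" "red k (\<beta> k) r" "f - r = q * g k"
    using md_exists[OF k f S] by blast
  have "md k f = r" using md_char[OF k qr(3,4)] .
  then show ?thesis using qr by blast
qed

lemma md_red: "k \<in> {1..n} \<Longrightarrow> red k (\<beta> k) (md k f)"
  using md_props[of k UNIV f] by (simp add: supp_def)

lemma md_add: "k \<in> {1..n} \<Longrightarrow> md k (f + f') = md k f + md k f'"
proof -
  assume k: "k \<in> {1..n}"
  obtain q where q: "f - md k f = q * g k" using md_props[of k UNIV f] k by (auto simp: supp_def)
  obtain q' where q': "f' - md k f' = q' * g k" using md_props[of k UNIV f'] k by (auto simp: supp_def)
  show ?thesis
  proof (rule md_char[OF k])
    show "red k (\<beta> k) (md k f + md k f')" using md_red[OF k, of f] md_red[OF k, of f'] by (rule red_add)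
    have "f + f' - (md k f + md k f') = (f - md k f) + (f' - md k f')" by (simp add: algebra_simps)
    also have "\<dots> = q * g k + q' * g k" by (simp only: q q')
    finally show "f + f' - (md k f + md k f') = (q + q') * g k" by (simp add: distrib_right)
  qed
qed

lemma md_zero: "k \<in> {1..n} \<Longrightarrow> md k 0 = 0"
  by (rule md_char[of k 0 0 0]) auto

lemma md_sum: "k \<in> {1..n} \<Longrightarrow> md k (sum f A) = (\<Sum>a\<in>A. md k (f a))"
  by (induction A rule: infinite_finite_induct) (auto simp: md_zero md_add)

lemma md_free_mult: "k \<in> {1..n} \<Longrightarrow> supp (- {k}) p \<Longrightarrow> md k (p * f) = p * md k f"
proof -
  assume k: "k \<in> {1..n}" and p: "supp (- {k}) p"
  obtain q where q: "f - md k f = q * g k" using md_props[of k UNIV f] k by (auto simp: supp_def)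
  show ?thesis
  proof (rule md_char[OF k])
    show "red k (\<beta> k) (p * md k f)" using p md_red[OF k] by (rule red_free_mult)
    have "p * f - p * md k f = p * (f - md k f)" by (simp add: algebra_simps)
    then show "p * f - p * md k f = (p * q) * g k" using q by simp
  qed
qed

lemma md_g: "k \<in> {1..n} \<Longrightarrow> md k (q * g k) = 0"
  by (rule md_char[of k 0 "q * g k" q]) auto

lemma md_fix: "k \<in> {1..n} \<Longrightarrow> red k (\<beta> k) f \<Longrightarrow> md k f = f"
  by (rule md_char[of k f f 0]) auto
end


lemma red_single_mult:
  assumes "lk \<delta> j < b" "supp T r" "j \<notin> T"
  shows "red j b (single \<delta> c * r)"
  unfolding red_def
proof
  fix \<gamma> assume "\<gamma> \<in> ks (single \<delta> c * r)"
  then obtain x y where xy: "x \<in> ks (single \<delta> c)" "y \<in> ks r" "\<gamma> = x + y"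
    using keys_mult[of "single \<delta> c" r] by blast
  have "x = \<delta>" using xy(1) by (simp split: if_splits)
  moreover have "lk y j = 0"
  proof -
    have "ks y \<subseteq> T" using xy(2) assms(2) unfolding supp_def by blast
    then have "j \<notin> ks y" using assms(3) by blast
    then show ?thesis by (simp add: in_keys_iff)
  qed
  ultimately show "lk \<gamma> j < b" using xy(3) assms(1) by (simp add: lookup_add)
qed

context tri begin
lemma md_keep:
  assumes k: "k \<in> {1..n}" and j: "j < k" and f: "red j b f"
  shows "red j b (md k f)"
proof -
  define sh where "sh \<gamma> = \<gamma> - single k (lk \<gamma> k)" for \<gamma> :: "nat \<Rightarrow>\<^sub>0 nat"
  have fe: "f = (\<Sum>\<gamma>\<in>ks f. single (sh \<gamma>) (lk f \<gamma>) * X k ^ (lk \<gamma> k))"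
  proof -
    have "(\<Sum>\<gamma>\<in>ks f. single (sh \<gamma>) (lk f \<gamma>) * X k ^ (lk \<gamma> k)) = (\<Sum>\<gamma>\<in>ks f. single \<gamma> (lk f \<gamma>))"
      by (rule sum.cong) (simp_all add: X_pow mult_single sh_def sh_add)
    then show ?thesis by (metis expansion)
  qed
  have shfree: "supp (- {k}) (single (sh \<gamma>) c)" for \<gamma> c
    by (rule supp_single) (auto simp: sh_def in_keys_iff sh_lk)
  have "md k f = (\<Sum>\<gamma>\<in>ks f. single (sh \<gamma>) (lk f \<gamma>) * md k (X k ^ (lk \<gamma> k)))"
    by (subst fe) (simp add: md_sum[OF k] md_free_mult[OF k shfree])
  also have "red j b \<dots>"
  proof (rule red_sum)
    fix \<gamma> assume g: "\<gamma> \<in> ks f"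
    have "supp {k..n} (X k ^ lk \<gamma> k)" using k by (intro supp_pow supp_X) simp
    then have "supp {k..n} (md k (X k ^ lk \<gamma> k))"
      using md_props[OF k, of "{k..n}" "X k ^ lk \<gamma> k"] k by simp
    moreover have "lk (sh \<gamma>) j < b" using g f j unfolding red_def sh_def by (simp add: sh_lk)
    ultimately show "red j b (single (sh \<gamma>) (lk f \<gamma>) * md k (X k ^ lk \<gamma> k))"
      using j by (intro red_single_mult[where T = "{k..n}"]) auto
  qed
  finally show ?thesis .
qed
end

context tri begin
definition Jset where "Jset = {(\<Sum>i=1..n. c i * g i) | c. \<forall>i\<in>{1..n}. in_R n (c i)}"

lemma in_R_supp: "in_R n p = supp {1..n} p" by (simp add: in_R_def supp_def)

lemma J_0: "0 \<in> Jset"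
  unfolding Jset_def by (rule CollectI, rule exI[of _ "\<lambda>_. 0"]) (simp add: in_R_supp)

lemma J_add: "x \<in> Jset \<Longrightarrow> y \<in> Jset \<Longrightarrow> x + y \<in> Jset"
proof -
  assume "x \<in> Jset" "y \<in> Jset"
  then obtain c d where c: "x = (\<Sum>i=1..n. c i * g i)" "\<forall>i\<in>{1..n}. in_R n (c i)"
    and d: "y = (\<Sum>i=1..n. d i * g i)" "\<forall>i\<in>{1..n}. in_R n (d i)"
    unfolding Jset_def by blast
  have "x + y = (\<Sum>i=1..n. (c i + d i) * g i)" using c d by (simp add: sum.distrib distrib_right)
  moreover have "\<forall>i\<in>{1..n}. in_R n (c i + d i)" using c d by (simp add: in_R_supp supp_add)
  ultimately show ?thesis unfolding Jset_def mem_Collect_eq by (intro exI[of _ "\<lambda>i. c i + d i"]) simp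
qed

lemma J_gen: "k \<in> {1..n} \<Longrightarrow> supp {1..n} q \<Longrightarrow> q * g k \<in> Jset"
proof -
  assume k: "k \<in> {1..n}" and q: "supp {1..n} q"
  have "q * g k = (\<Sum>i=1..n. (if i = k then q else 0) * g i)"
    using k by (simp add: if_distrib[of "\<lambda>x. x * _"] cong: if_cong)
  moreover have "\<forall>i\<in>{1..n}. in_R n (if i = k then q else 0)" using q by (simp add: in_R_supp)
  ultimately show ?thesis unfolding Jset_def mem_Collect_eq by (intro exI[of _ "\<lambda>i. if i = k then q else 0"]) simp
qed
end


context tri begin
primrec NN :: "nat \<Rightarrow> mpoly_int \<Rightarrow> mpoly_int" where
  "NN 0 f = f" | "NN (Suc k) f = md (Suc k) (NN k f)"

lemma NN_supp: "supp {1..n} f \<Longrightarrow> k \<le> n \<Longrightarrow> supp {1..n} (NN k f)"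
proof (induction k)
  case (Suc k)
  then have "supp {1..n} (NN k f)" by simp
  then show ?case using md_props[of "Suc k" "{1..n}" "NN k f"] Suc.prems by auto
qed simp

lemma NN_J: "supp {1..n} f \<Longrightarrow> k \<le> n \<Longrightarrow> f - NN k f \<in> Jset"
proof (induction k)
  case 0 then show ?case using J_0 by simp
next
  case (Suc k)
  have s: "supp {1..n} (NN k f)" using NN_supp Suc.prems by simp
  obtain q where q: "supp {1..n} q" "NN k f - md (Suc k) (NN k f) = q * g (Suc k)"
    using md_props[of "Suc k" "{1..n}" "NN k f"] s Suc.prems by auto
  have "f - NN (Suc k) f = (f - NN k f) + (NN k f - md (Suc k) (NN k f))" by simp
  also have "\<dots> \<in> Jset" using Suc J_add J_gen q Suc.prems by simp
  finally show ?case .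
qed

lemma NN_red: "k \<le> n \<Longrightarrow> j \<in> {1..k} \<Longrightarrow> red j (\<beta> j) (NN k f)"
proof (induction k)
  case (Suc k)
  show ?case
  proof (cases "j = Suc k")
    case True then show ?thesis using md_red Suc.prems by simp
  next
    case False
    then have "red j (\<beta> j) (NN k f)" using Suc by simp
    then show ?thesis using md_keep[of "Suc k" j] False Suc.prems by simp
  qed
qed simp

lemma NN_add: "k \<le> n \<Longrightarrow> NN k (f + f') = NN k f + NN k f'"
  by (induction k) (simp_all add: md_add)

lemma NN_zero: "k \<le> n \<Longrightarrow> NN k 0 = 0"
  by (induction k) (simp_all add: md_zero)

lemma NN_sum: "k \<le> n \<Longrightarrow> NN k (sum f A) = (\<Sum>a\<in>A. NN k (f a))"
  by (induction A rule: infinite_finite_induct) (simp_all add: NN_zero NN_add)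

lemma NN_g: "i \<in> {1..n} \<Longrightarrow> k \<le> n \<Longrightarrow> NN k (q * g i) = (if k < i then NN k q * g i else 0)"
proof (induction k)
  case (Suc k)
  have k: "Suc k \<in> {1..n}" using Suc.prems by simp
  show ?case
  proof (cases "Suc k < i")
    case True
    have "supp (- {Suc k}) (g i)" using g_supp[OF Suc.prems(1)] by (rule supp_mono) (use True in auto)
    then show ?thesis using True Suc k md_free_mult[OF k, of "g i" "NN k q"] by (simp add: mult.commute)
  next
    case False
    show ?thesis
    proof (cases "Suc k = i")
      case True
      have "NN k (q * g i) = NN k q * g i" using Suc True by simp
      then show ?thesis using md_g[OF k] True[symmetric] by simp
    next
      case False2: False
      then show ?thesis using Suc False md_zero[OF k] by simp
    qed
  qed
qed simp

lemma NN_fix: "k \<le> n \<Longrightarrow> (\<forall>j\<in>{1..n}. red j (\<beta> j) f) \<Longrightarrow> NN k f = f"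
  by (induction k) (simp_all add: md_fix)

lemma NN_J0: "x \<in> Jset \<Longrightarrow> NN n x = 0"
proof -
  assume "x \<in> Jset"
  then obtain c where c: "x = (\<Sum>i=1..n. c i * g i)" unfolding Jset_def by blast
  show ?thesis unfolding c by (simp add: NN_sum NN_g)
qed
end


lemma finite_bounded_exps:
  assumes "finite S"
  shows "finite {\<alpha> :: nat \<Rightarrow>\<^sub>0 nat. ks \<alpha> \<subseteq> S \<and> (\<forall>i. lk \<alpha> i \<le> M)}"
proof -
  let ?F = "{f :: nat \<Rightarrow> nat. \<forall>x. (x \<in> S \<longrightarrow> f x \<in> {0..M}) \<and> (x \<notin> S \<longrightarrow> f x = 0)}"
  have fin: "finite ?F" using assms by (intro finite_set_of_finite_funs) auto
  have "lk ` {\<alpha> :: nat \<Rightarrow>\<^sub>0 nat. ks \<alpha> \<subseteq> S \<and> (\<forall>i. lk \<alpha> i \<le> M)} \<subseteq> ?F"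
  proof
    fix f assume "f \<in> lk ` {\<alpha> :: nat \<Rightarrow>\<^sub>0 nat. ks \<alpha> \<subseteq> S \<and> (\<forall>i. lk \<alpha> i \<le> M)}"
    then obtain \<alpha> where a: "f = lk \<alpha>" "ks \<alpha> \<subseteq> S" "\<forall>i. lk \<alpha> i \<le> M" by blast
    have "x \<notin> S \<Longrightarrow> lk \<alpha> x = 0" for x using a(2) by (metis in_keys_iff subsetD)
    then show "f \<in> ?F" using a by auto
  qed
  then have "finite (lk ` {\<alpha> :: nat \<Rightarrow>\<^sub>0 nat. ks \<alpha> \<subseteq> S \<and> (\<forall>i. lk \<alpha> i \<le> M)})"
    using fin finite_subset by blast
  moreover have "inj_on lk {\<alpha> :: nat \<Rightarrow>\<^sub>0 nat. ks \<alpha> \<subseteq> S \<and> (\<forall>i. lk \<alpha> i \<le> M)}"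
    by (rule inj_onI, rule poly_mapping_eqI) simp
  ultimately show ?thesis by (rule finite_imageD)
qed


lemma of_int_monomial: "of_int z * monomial \<alpha> = single \<alpha> z"
proof -
  have "(of_int z :: mpoly_int) = single 0 z" by (metis single_of_int of_int_eq_id id_apply)
  then show ?thesis by (simp add: monomial_def mult_single)
qed


lemma lookup_sum_single: "finite B \<Longrightarrow> lk (\<Sum>\<alpha>\<in>B. single \<alpha> (c \<alpha>)) \<gamma> = (if \<gamma> \<in> B then c \<gamma> else 0)"
  by (simp add: lookup_sum lookup_single when_def)
context tri begin
definition Bset where "Bset = {\<alpha>. ks \<alpha> \<subseteq> {1..n} \<and> (\<forall>i\<in>{1..n}. lk \<alpha> i \<le> \<beta> i - 1)}"

lemma finite_B: "finite Bset"
proof -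
  have "Bset \<subseteq> {\<alpha> :: nat \<Rightarrow>\<^sub>0 nat. ks \<alpha> \<subseteq> {1..n} \<and> (\<forall>i. lk \<alpha> i \<le> (\<Sum>j\<in>{1..n}. \<beta> j))}"
  proof (rule subsetI)
    fix \<alpha> assume "\<alpha> \<in> Bset"
    then have a: "ks \<alpha> \<subseteq> {1..n}" "\<forall>i\<in>{1..n}. lk \<alpha> i \<le> \<beta> i - 1" unfolding Bset_def by auto
    have "lk \<alpha> i \<le> (\<Sum>j = 1..n. \<beta> j)" for i
    proof (cases "i \<in> {1..n}")
      case True
      then have "lk \<alpha> i \<le> \<beta> i" using a(2) by fastforce
      also have "\<beta> i \<le> (\<Sum>j = 1..n. \<beta> j)" using True by (intro member_le_sum) auto
      finally show ?thesis .
    next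
      case False
      then have "i \<notin> ks \<alpha>" using a(1) by blast
      then show ?thesis by (simp add: in_keys_iff)
    qed
    then show "\<alpha> \<in> {\<alpha> :: nat \<Rightarrow>\<^sub>0 nat. ks \<alpha> \<subseteq> {1..n} \<and> (\<forall>i. lk \<alpha> i \<le> (\<Sum>j\<in>{1..n}. \<beta> j))}"
      using a(1) by blast
  qed
  then show ?thesis using finite_bounded_exps[of "{1..n}"] finite_subset by blast
qed

lemma red_B: "supp {1..n} r \<Longrightarrow> (\<forall>j\<in>{1..n}. red j (\<beta> j) r) \<Longrightarrow> ks r \<subseteq> Bset"
  unfolding Bset_def supp_def red_def by fastforce

theorem tri_main:
  "(\<forall>f. in_R n f \<longrightarrow> (\<exists>c :: (nat \<Rightarrow>\<^sub>0 nat) \<Rightarrow> int.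
      f - (\<Sum>\<alpha>\<in>Bset. of_int (c \<alpha>) * monomial \<alpha>) \<in> Jset))
   \<and> (\<forall>c :: (nat \<Rightarrow>\<^sub>0 nat) \<Rightarrow> int.
      (\<Sum>\<alpha>\<in>Bset. of_int (c \<alpha>) * monomial \<alpha>) \<in> Jset \<longrightarrow> (\<forall>\<alpha>\<in>Bset. c \<alpha> = 0))"
proof (intro conjI allI impI ballI)
  fix f assume f: "in_R n f"
  then have fs: "supp {1..n} f" by (simp add: in_R_supp)
  define r where "r = NN n f"
  have rs: "supp {1..n} r" using NN_supp[OF fs] r_def by simp
  have rr: "\<forall>j\<in>{1..n}. red j (\<beta> j) r" using NN_red r_def by simp
  have kB: "ks r \<subseteq> Bset" using red_B[OF rs rr] .
  have "r = (\<Sum>\<alpha>\<in>Bset. of_int (lk r \<alpha>) * monomial \<alpha>)"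
  proof (rule poly_mapping_eqI)
    fix \<gamma>
    show "lk r \<gamma> = lk (\<Sum>\<alpha>\<in>Bset. of_int (lk r \<alpha>) * monomial \<alpha>) \<gamma>"
      using kB by (auto simp: of_int_monomial lookup_sum_single[OF finite_B] in_keys_iff)
  qed
  moreover have "f - r \<in> Jset" using NN_J[OF fs] r_def by simp
  ultimately show "\<exists>c :: (nat \<Rightarrow>\<^sub>0 nat) \<Rightarrow> int. f - (\<Sum>\<alpha>\<in>Bset. of_int (c \<alpha>) * monomial \<alpha>) \<in> Jset"
    by metis
next
  fix c :: "(nat \<Rightarrow>\<^sub>0 nat) \<Rightarrow> int" and \<alpha>
  assume J: "(\<Sum>\<alpha>\<in>Bset. of_int (c \<alpha>) * monomial \<alpha>) \<in> Jset" and a: "\<alpha> \<in> Bset"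
  define s where "s = (\<Sum>\<alpha>\<in>Bset. single \<alpha> (c \<alpha>))"
  have sJ: "s \<in> Jset" using J unfolding s_def by (simp add: of_int_monomial)
  have ls: "lk s \<gamma> = (if \<gamma> \<in> Bset then c \<gamma> else 0)" for \<gamma>
    unfolding s_def by (rule lookup_sum_single[OF finite_B])
  have ksB: "ks s \<subseteq> Bset" using ls by (auto simp: in_keys_iff split: if_splits)
  have ss: "supp {1..n} s" using ksB unfolding supp_def Bset_def by auto
  have sr: "\<forall>j\<in>{1..n}. red j (\<beta> j) s"
  proof
    fix j assume j: "j \<in> {1..n}"
    have "1 \<le> \<beta> j" using \<beta>_pos[OF j] .
    then show "red j (\<beta> j) s" using ksB j unfolding red_def Bset_def by fastforce
  qed
  have "s = NN n s" using NN_fix[of n s] sr by simp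
  also have "\<dots> = 0" using NN_J0[OF sJ] .
  finally have "s = 0" .
  then show "c \<alpha> = 0" using ls[of \<alpha>] a by simp
qed
end


lemma hess_beta_pos:
  assumes "is_hessenberg n h" "k \<in> {1..n}"
  shows "1 \<le> hess_beta n h k"
proof -
  have "{k' \<in> {1..n}. h k' < k} \<subseteq> {1..k - 1}"
  proof
    fix k' assume "k' \<in> {k' \<in> {1..n}. h k' < k}"
    then have "k' \<in> {1..n}" "h k' < k" by auto
    moreover have "k' \<le> h k'" using assms(1) \<open>k' \<in> {1..n}\<close> unfolding is_hessenberg_def by blast
    ultimately show "k' \<in> {1..k - 1}" by auto
  qed
  then have "card {k' \<in> {1..n}. h k' < k} \<le> k - 1"
    using card_mono[of "{1..k-1}"] by fastforce
  then show ?thesis using assms(2) unfolding hess_beta_def by auto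
qed

lemma supp_complete_hom: "supp S (complete_hom r S)"
  unfolding complete_hom_def monomial_def by (intro supp_sum supp_single) auto

lemma complete_hom_0: "finite S \<Longrightarrow> complete_hom 0 S = 1"
proof -
  assume fin: "finite S"
  have "{\<alpha> :: nat \<Rightarrow>\<^sub>0 nat. ks \<alpha> \<subseteq> S \<and> (\<Sum>j\<in>S. lk \<alpha> j) = 0} = {0}"
  proof (intro equalityI subsetI)
    fix \<alpha> :: "nat \<Rightarrow>\<^sub>0 nat" assume "\<alpha> \<in> {\<alpha> :: nat \<Rightarrow>\<^sub>0 nat. ks \<alpha> \<subseteq> S \<and> (\<Sum>j\<in>S. lk \<alpha> j) = 0}"
    then have a0: "ks \<alpha> \<subseteq> S" "(\<Sum>j\<in>S. lk \<alpha> j) = 0" by auto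
    have a: "ks \<alpha> \<subseteq> S" "\<forall>j\<in>S. lk \<alpha> j = 0" using a0 sum_eq_0_iff[OF fin, of "lk \<alpha>"] by auto
    have "lk \<alpha> j = 0" for j
      using a by (metis in_keys_iff subsetD)
    then have "\<alpha> = 0" by (intro poly_mapping_eqI) simp
    then show "\<alpha> \<in> {0}" by simp
  qed simp
  then show ?thesis unfolding complete_hom_def monomial_def by simp
qed

lemma finite_A: "finite S \<Longrightarrow> finite {\<alpha> :: nat \<Rightarrow>\<^sub>0 nat. ks \<alpha> \<subseteq> S \<and> (\<Sum>j\<in>S. lk \<alpha> j) = (r::nat)}"
proof -
  assume fin: "finite S"
  have "{\<alpha>. ks \<alpha> \<subseteq> S \<and> (\<Sum>j\<in>S. lk \<alpha> j) = r} \<subseteq> {\<alpha> :: nat \<Rightarrow>\<^sub>0 nat. ks \<alpha> \<subseteq> S \<and> (\<forall>i. lk \<alpha> i \<le> r)}"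
  proof (rule subsetI)
    fix \<alpha> assume "\<alpha> \<in> {\<alpha>. ks \<alpha> \<subseteq> S \<and> (\<Sum>j\<in>S. lk \<alpha> j) = r}"
    then have a: "ks \<alpha> \<subseteq> S" "(\<Sum>j\<in>S. lk \<alpha> j) = r" by auto
    have "lk \<alpha> i \<le> r" for i
    proof (cases "i \<in> S")
      case True then show ?thesis using a(2) member_le_sum[OF True _ fin, of "lk \<alpha>"] by simp
    next
      case False then have "i \<notin> ks \<alpha>" using a(1) by blast
      then show ?thesis by (simp add: in_keys_iff)
    qed
    then show "\<alpha> \<in> {\<alpha> :: nat \<Rightarrow>\<^sub>0 nat. ks \<alpha> \<subseteq> S \<and> (\<forall>i. lk \<alpha> i \<le> r)}" using a(1) by blast
  qed
  then show ?thesis using finite_bounded_exps[OF fin, of r] finite_subset by blast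
qed


lemma complete_hom_split:
  assumes kn: "k \<le> n"
  shows "complete_hom r {k..n} = (\<Sum>j\<le>r. complete_hom (r - j) {Suc k..n} * X k ^ j)"
proof -
  define A where "A r T = {\<alpha> :: nat \<Rightarrow>\<^sub>0 nat. ks \<alpha> \<subseteq> T \<and> (\<Sum>j\<in>T. lk \<alpha> j) = r}" for r T
  have ch: "complete_hom r T = (\<Sum>\<alpha>\<in>A r T. single \<alpha> 1)" for r T
    unfolding complete_hom_def monomial_def A_def by simp
  define S' where "S' = {Suc k..n}"
  have finA: "finite (A r S')" for r unfolding A_def S'_def by (rule finite_A) simp
  have ssplit: "(\<Sum>j\<in>{k..n}. f j) = f k + (\<Sum>j\<in>S'. f j)" for f :: "nat \<Rightarrow> nat"
    unfolding S'_def using kn by (rule sum.atLeast_Suc_atMost)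
  define Sg where "Sg = (SIGMA j:{..r}. A (r - j) S')"
  define jj where "jj = (\<lambda>p :: nat \<times> (nat \<Rightarrow>\<^sub>0 nat). snd p + single k (fst p))"
  define ii where "ii = (\<lambda>\<alpha> :: nat \<Rightarrow>\<^sub>0 nat. (lk \<alpha> k, \<alpha> - single k (lk \<alpha> k)))"
  have F3: "jj (ii \<alpha>) = \<alpha>" for \<alpha>
    unfolding ii_def jj_def by (simp add: sh_add)
  have F4: "ii \<alpha> \<in> Sg" if a: "\<alpha> \<in> A r {k..n}" for \<alpha>
  proof -
    have a1: "ks \<alpha> \<subseteq> {k..n}" and a2: "lk \<alpha> k + (\<Sum>j\<in>S'. lk \<alpha> j) = r"
      using a unfolding A_def using ssplit[of "lk \<alpha>"] by auto
    have "ks (\<alpha> - single k (lk \<alpha> k)) \<subseteq> S'"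
    proof
      fix i assume "i \<in> ks (\<alpha> - single k (lk \<alpha> k))"
      then have "i \<noteq> k" "i \<in> ks \<alpha>" by (auto simp: in_keys_iff sh_lk split: if_splits)
      then show "i \<in> S'" using a1 unfolding S'_def by auto
    qed
    moreover have "(\<Sum>j\<in>S'. lk (\<alpha> - single k (lk \<alpha> k)) j) = r - lk \<alpha> k"
    proof -
      have "(\<Sum>j\<in>S'. lk (\<alpha> - single k (lk \<alpha> k)) j) = (\<Sum>j\<in>S'. lk \<alpha> j)"
        by (rule sum.cong) (auto simp: sh_lk S'_def)
      then show ?thesis using a2 by simp
    qed
    moreover have "lk \<alpha> k \<le> r" using a2 by simp
    ultimately show ?thesis unfolding A_def Sg_def ii_def by simp
  qed
  have F12: "ii (jj p) = p \<and> jj p \<in> A r {k..n}" if p: "p \<in> Sg" for p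
  proof -
    obtain j \<alpha>' where pj: "p = (j, \<alpha>')" by (cases p)
    have j: "j \<le> r" and a1: "ks \<alpha>' \<subseteq> S'" and a2: "(\<Sum>i\<in>S'. lk \<alpha>' i) = r - j"
      using p unfolding pj A_def Sg_def by auto
    have "k \<notin> ks \<alpha>'" using a1 unfolding S'_def by auto
    then have k0: "lk \<alpha>' k = 0" by (simp add: in_keys_iff)
    have lkk: "lk (\<alpha>' + single k j) i = lk \<alpha>' i + (if i = k then j else 0)" for i
      by (simp add: lookup_add lookup_single when_def)
    have "\<alpha>' + single k j - single k j = \<alpha>'"
      by (rule poly_mapping_eqI) (simp add: lookup_minus lookup_add)
    then have e1: "ii (jj p) = p" unfolding pj ii_def jj_def by (simp add: lkk k0)
    have "ks (\<alpha>' + single k j) \<subseteq> {k..n}"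
      using a1 kn unfolding S'_def by (auto simp: keys_nat_add split: if_splits)
    moreover have "(\<Sum>i\<in>{k..n}. lk (\<alpha>' + single k j) i) = r"
    proof -
      have "(\<Sum>i\<in>S'. lk (\<alpha>' + single k j) i) = (\<Sum>i\<in>S'. lk \<alpha>' i)"
        by (rule sum.cong) (auto simp: lkk S'_def)
      then show ?thesis using ssplit[of "lk (\<alpha>' + single k j)"] a2 j by (simp add: lkk k0)
    qed
    ultimately have "jj p \<in> A r {k..n}" unfolding pj A_def jj_def by simp
    with e1 show ?thesis by blast
  qed
  have "(\<Sum>j\<le>r. complete_hom (r - j) S' * X k ^ j) = (\<Sum>j\<le>r. \<Sum>\<alpha>'\<in>A (r - j) S'. single (\<alpha>' + single k j) 1)"
    by (simp add: ch sum_distrib_right X_pow mult_single)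
  also have "\<dots> = (\<Sum>p\<in>Sg. single (jj p) 1)"
    unfolding Sg_def jj_def by (subst sum.Sigma) (auto simp: finA split_def)
  also have "\<dots> = (\<Sum>\<alpha>\<in>A r {k..n}. single \<alpha> 1)"
    by (rule sum.reindex_bij_witness[where j = jj and i = ii]) (use F12 F3 F4 in auto)
  finally show ?thesis unfolding S'_def ch by simp
qed

definition GP :: "nat \<Rightarrow> nat \<Rightarrow> nat \<Rightarrow> mpoly_int poly" where
  "GP n r k = (\<Sum>j\<le>r. monom (complete_hom (r - j) {Suc k..n}) j)"

lemma GP_coeff: "coeff (GP n r k) j = (if j \<le> r then complete_hom (r - j) {Suc k..n} else 0)"
  unfolding GP_def coeff_sum coeff_monom by simp

lemma GP_supp: "supp {Suc k..n} (coeff (GP n r k) j)"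
  by (simp add: GP_coeff supp_complete_hom)

lemma GP_lc: "coeff (GP n r k) r = 1"
  by (simp add: GP_coeff complete_hom_0)

lemma GP_deg: "degree (GP n r k) = r"
proof (rule antisym)
  show "degree (GP n r k) \<le> r" unfolding GP_def
    by (rule degree_sum_le) (auto intro: order_trans[OF degree_monom_le])
  show "r \<le> degree (GP n r k)" by (rule le_degree) (simp add: GP_lc)
qed

lemma GP_E: "k \<le> n \<Longrightarrow> E k (GP n r k) = complete_hom r {k..n}"
  unfolding E_def GP_def by (simp add: poly_sum poly_monom complete_hom_split)

theorem mainTheorem10:
  fixes n :: nat and h :: "nat \<Rightarrow> nat"
  assumes "is_hessenberg n h"
  shows "(\<forall>f :: mpoly_int. in_R n f \<longrightarrow> (\<exists>c :: (nat \<Rightarrow>\<^sub>0 nat) \<Rightarrow> int.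
            f - (\<Sum>\<alpha>\<in>hess_basis_exps n h. of_int (c \<alpha>) * monomial \<alpha>) \<in> hess_ideal n h))
       \<and> (\<forall>c :: (nat \<Rightarrow>\<^sub>0 nat) \<Rightarrow> int.
            (\<Sum>\<alpha>\<in>hess_basis_exps n h. of_int (c \<alpha>) * monomial \<alpha>) \<in> hess_ideal n h
            \<longrightarrow> (\<forall>\<alpha>\<in>hess_basis_exps n h. c \<alpha> = 0))"
proof -
  interpret T: tri n "hess_beta n h" "\<lambda>k. complete_hom (hess_beta n h k) {k..n}"
    "\<lambda>k. GP n (hess_beta n h k) k"
  proof
    fix k j assume k: "k \<in> {1..n}"
    show "lead_coeff (GP n (hess_beta n h k) k) = 1" by (simp add: GP_deg GP_lc)
    show "degree (GP n (hess_beta n h k) k) = hess_beta n h k" by (rule GP_deg)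
    show "1 \<le> hess_beta n h k" using hess_beta_pos[OF assms k] .
    show "supp {Suc k..n} (coeff (GP n (hess_beta n h k) k) j)" by (rule GP_supp)
    show "complete_hom (hess_beta n h k) {k..n} = E k (GP n (hess_beta n h k) k)"
      using k by (simp add: GP_E)
  qed
  have B: "hess_basis_exps n h = T.Bset" unfolding hess_basis_exps_def T.Bset_def by simp
  have J: "hess_ideal n h = T.Jset" unfolding hess_ideal_def T.Jset_def by simp
  show ?thesis unfolding B J by (rule T.tri_main)
qed

end
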